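(* Let $U,V\subseteq X$ be Scott-open subdcpos of a dcpo $X$, and let $U\wedge V$ and $U\vee V$ be the Scott-open subdcpos with characteristic maps $\phi_U\wedge\phi_V$ and $\phi_U\vee\phi_V$. Then the commutative square of inclusions $U\wedge V\to U$, $U\wedge V\to V$, $U\to U\vee V$, $V\to U\vee V$ is both a pullback and a pushout in $\mathcal{D}$. (That is, finite unions of Scott-open subobjects in $\mathcal{D}$ are effective.)
   Context: Fix a poset $\mathbb{L}$ with finite meets; work internally in $\widehat{\mathbb{L}}=[\mathbb{L}^{op},\mathbf{Set}]$. $\mathcal{D}$ is the category of dcpos (posets with suprema of inhabited directed subsets) and continuous (directed-sup-preserving) maps. $\Sigma$ is the Sierpiński dcpo with carrier $\Omega$ ordered by implication. A Scott-open subdcpo of $A$ is $\{x\mid\phi(x)\}$ with the order induced from $A$, for a continuous characteristic map $\phi:A\to\Sigma$. *)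

theory Defs
  imports Main
begin

text \<open>Internal posets/dcpos in the presheaf topos [L^op, Set], described externally
  (Kripke-Joyal unfolding).  An object is a triple (carrier, restriction, order):
  carrier p = X(p); restriction p q x = x restricted along q \<le> p; order p x y = (x \<le> y) at stage p.\<close>

type_synonym ('l, 'a) pobj =
  "('l \<Rightarrow> 'a set) \<times> ('l \<Rightarrow> 'l \<Rightarrow> 'a \<Rightarrow> 'a) \<times> ('l \<Rightarrow> 'a \<Rightarrow> 'a \<Rightarrow> bool)"

definition car :: "('l, 'a) pobj \<Rightarrow> 'l \<Rightarrow> 'a set" where
  "car A = fst A"
definition rs :: "('l, 'a) pobj \<Rightarrow> 'l \<Rightarrow> 'l \<Rightarrow> 'a \<Rightarrow> 'a" where
  "rs A = fst (snd A)"
definition le :: "('l, 'a) pobj \<Rightarrow> 'l \<Rightarrow> 'a \<Rightarrow> 'a \<Rightarrow> bool" where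
  "le A = snd (snd A)"

definition is_presheaf :: "('l::order, 'a) pobj \<Rightarrow> bool" where
  "is_presheaf A \<longleftrightarrow>
     (\<forall>p q x. q \<le> p \<and> x \<in> car A p \<longrightarrow> rs A p q x \<in> car A q) \<and>
     (\<forall>p x. x \<in> car A p \<longrightarrow> rs A p p x = x) \<and>
     (\<forall>p q s x. s \<le> q \<and> q \<le> p \<and> x \<in> car A p \<longrightarrow> rs A q s (rs A p q x) = rs A p s x)"

definition is_iposet :: "('l::order, 'a) pobj \<Rightarrow> bool" where
  "is_iposet A \<longleftrightarrow> is_presheaf A \<and>
     (\<forall>p x y. le A p x y \<longrightarrow> x \<in> car A p \<and> y \<in> car A p) \<and>
     (\<forall>p q x y. q \<le> p \<and> le A p x y \<longrightarrow> le A q (rs A p q x) (rs A p q y)) \<and>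
     (\<forall>p x. x \<in> car A p \<longrightarrow> le A p x x) \<and>
     (\<forall>p x y z. le A p x y \<and> le A p y z \<longrightarrow> le A p x z) \<and>
     (\<forall>p x y. le A p x y \<and> le A p y x \<longrightarrow> x = y)"

text \<open>An element of the power object P(A) at stage q: a subpresheaf of A restricted to the down-set of q.\<close>
definition sub_on :: "('l::order, 'a) pobj \<Rightarrow> 'l \<Rightarrow> ('l \<Rightarrow> 'a set) \<Rightarrow> bool" where
  "sub_on A q D \<longleftrightarrow> (\<forall>r. r \<le> q \<longrightarrow> D r \<subseteq> car A r) \<and>
     (\<forall>r s x. s \<le> r \<and> r \<le> q \<and> x \<in> D r \<longrightarrow> rs A r s x \<in> D s)"

definition dir_inh :: "('l::order, 'a) pobj \<Rightarrow> 'l \<Rightarrow> ('l \<Rightarrow> 'a set) \<Rightarrow> bool" where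
  "dir_inh A q D \<longleftrightarrow> D q \<noteq> {} \<and>
     (\<forall>r x y. r \<le> q \<and> x \<in> D r \<and> y \<in> D r \<longrightarrow> (\<exists>z\<in>D r. le A r x z \<and> le A r y z))"

definition is_ub :: "('l::order, 'a) pobj \<Rightarrow> 'l \<Rightarrow> ('l \<Rightarrow> 'a set) \<Rightarrow> 'a \<Rightarrow> bool" where
  "is_ub A q D u \<longleftrightarrow> u \<in> car A q \<and> (\<forall>r x. r \<le> q \<and> x \<in> D r \<longrightarrow> le A r x (rs A q r u))"

definition is_sup :: "('l::order, 'a) pobj \<Rightarrow> 'l \<Rightarrow> ('l \<Rightarrow> 'a set) \<Rightarrow> 'a \<Rightarrow> bool" where
  "is_sup A q D s \<longleftrightarrow> is_ub A q D s \<and>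
     (\<forall>r u. r \<le> q \<and> is_ub A r D u \<longrightarrow> le A r (rs A q r s) u)"

definition is_dcpo :: "('l::order, 'a) pobj \<Rightarrow> bool" where
  "is_dcpo A \<longleftrightarrow> is_iposet A \<and>
     (\<forall>q D. sub_on A q D \<and> dir_inh A q D \<longrightarrow> (\<exists>s. is_sup A q D s))"

definition is_morph :: "('l::order, 'a) pobj \<Rightarrow> ('l, 'b) pobj \<Rightarrow> ('l \<Rightarrow> 'a \<Rightarrow> 'b) \<Rightarrow> bool" where
  "is_morph A B f \<longleftrightarrow> (\<forall>p x. x \<in> car A p \<longrightarrow> f p x \<in> car B p) \<and>
     (\<forall>p q x. q \<le> p \<and> x \<in> car A p \<longrightarrow> f q (rs A p q x) = rs B p q (f p x))"

definition continuous_D :: "('l::order, 'a) pobj \<Rightarrow> ('l, 'b) pobj \<Rightarrow> ('l \<Rightarrow> 'a \<Rightarrow> 'b) \<Rightarrow> bool" where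
  "continuous_D A B f \<longleftrightarrow> is_morph A B f \<and>
     (\<forall>q D s. sub_on A q D \<and> dir_inh A q D \<and> is_sup A q D s \<longrightarrow>
        is_sup B q (\<lambda>r. f r ` D r) (f q s))"

definition meq :: "('l, 'a) pobj \<Rightarrow> ('l \<Rightarrow> 'a \<Rightarrow> 'b) \<Rightarrow> ('l \<Rightarrow> 'a \<Rightarrow> 'b) \<Rightarrow> bool" where
  "meq A f g \<longleftrightarrow> (\<forall>p. \<forall>x\<in>car A p. f p x = g p x)"

definition mcomp :: "('l \<Rightarrow> 'b \<Rightarrow> 'c) \<Rightarrow> ('l \<Rightarrow> 'a \<Rightarrow> 'b) \<Rightarrow> 'l \<Rightarrow> 'a \<Rightarrow> 'c" where
  "mcomp g f = (\<lambda>p x. g p (f p x))"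

definition mid :: "'l \<Rightarrow> 'a \<Rightarrow> 'a" where
  "mid = (\<lambda>p x. x)"

text \<open>The Sierpinski dcpo: carrier Omega (sieves on p), restriction by intersection, order = inclusion.\<close>
definition Sig :: "('l::order, 'l set) pobj" where
  "Sig = ((\<lambda>p. {S. S \<subseteq> {q. q \<le> p} \<and> (\<forall>a b. a \<in> S \<and> b \<le> a \<longrightarrow> b \<in> S)}),
          (\<lambda>p q S. {s \<in> S. s \<le> q}),
          (\<lambda>p S T. S \<subseteq> T \<and> S \<subseteq> {q. q \<le> p} \<and> (\<forall>a b. a \<in> S \<and> b \<le> a \<longrightarrow> b \<in> S)
                           \<and> T \<subseteq> {q. q \<le> p} \<and> (\<forall>a b. a \<in> T \<and> b \<le> a \<longrightarrow> b \<in> T)))"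

text \<open>Scott-open subdcpo {x | phi x} with induced order; phi x holds at stage p iff p \<in> phi p x.\<close>
definition sub_obj :: "('l::order, 'a) pobj \<Rightarrow> ('l \<Rightarrow> 'a \<Rightarrow> 'l set) \<Rightarrow> ('l, 'a) pobj" where
  "sub_obj X phi = ((\<lambda>p. {x \<in> car X p. p \<in> phi p x}), rs X,
      (\<lambda>p x y. le X p x y \<and> p \<in> phi p x \<and> p \<in> phi p y))"

definition is_pullback_D :: "'z itself \<Rightarrow> ('l::order, 'p) pobj \<Rightarrow> ('l, 'a) pobj \<Rightarrow> ('l, 'b) pobj \<Rightarrow> ('l, 'c) pobj
    \<Rightarrow> ('l \<Rightarrow> 'p \<Rightarrow> 'a) \<Rightarrow> ('l \<Rightarrow> 'p \<Rightarrow> 'b) \<Rightarrow> ('l \<Rightarrow> 'a \<Rightarrow> 'c) \<Rightarrow> ('l \<Rightarrow> 'b \<Rightarrow> 'c) \<Rightarrow> bool" where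
  "is_pullback_D _ P A B C pa pb fa fb \<longleftrightarrow>
     is_dcpo P \<and> is_dcpo A \<and> is_dcpo B \<and> is_dcpo C \<and>
     continuous_D P A pa \<and> continuous_D P B pb \<and> continuous_D A C fa \<and> continuous_D B C fb \<and>
     meq P (mcomp fa pa) (mcomp fb pb) \<and>
     (\<forall>(Z::('l, 'z) pobj) za zb. is_dcpo Z \<and> continuous_D Z A za \<and> continuous_D Z B zb \<and>
        meq Z (mcomp fa za) (mcomp fb zb) \<longrightarrow>
        (\<exists>h. continuous_D Z P h \<and> meq Z (mcomp pa h) za \<and> meq Z (mcomp pb h) zb \<and>
           (\<forall>h'. continuous_D Z P h' \<and> meq Z (mcomp pa h') za \<and> meq Z (mcomp pb h') zb
                 \<longrightarrow> meq Z h h')))"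

definition is_pushout_D :: "'z itself \<Rightarrow> ('l::order, 'p) pobj \<Rightarrow> ('l, 'a) pobj \<Rightarrow> ('l, 'b) pobj \<Rightarrow> ('l, 'c) pobj
    \<Rightarrow> ('l \<Rightarrow> 'p \<Rightarrow> 'a) \<Rightarrow> ('l \<Rightarrow> 'p \<Rightarrow> 'b) \<Rightarrow> ('l \<Rightarrow> 'a \<Rightarrow> 'c) \<Rightarrow> ('l \<Rightarrow> 'b \<Rightarrow> 'c) \<Rightarrow> bool" where
  "is_pushout_D _ P A B C pa pb fa fb \<longleftrightarrow>
     is_dcpo P \<and> is_dcpo A \<and> is_dcpo B \<and> is_dcpo C \<and>
     continuous_D P A pa \<and> continuous_D P B pb \<and> continuous_D A C fa \<and> continuous_D B C fb \<and>
     meq P (mcomp fa pa) (mcomp fb pb) \<and>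
     (\<forall>(Z::('l, 'z) pobj) za zb. is_dcpo Z \<and> continuous_D A Z za \<and> continuous_D B Z zb \<and>
        meq P (mcomp za pa) (mcomp zb pb) \<longrightarrow>
        (\<exists>h. continuous_D C Z h \<and> meq A (mcomp h fa) za \<and> meq B (mcomp h fb) zb \<and>
           (\<forall>h'. continuous_D C Z h' \<and> meq A (mcomp h' fa) za \<and> meq B (mcomp h' fb) zb
                 \<longrightarrow> meq C h h')))"

end

theory Submission
  imports Defs
begin

lemma car_Sig: "car Sig p = {S. S \<subseteq> {q. q \<le> p} \<and> (\<forall>a b. a \<in> S \<and> b \<le> a \<longrightarrow> b \<in> S)}"
  by (simp add: car_def Sig_def)
lemma rs_Sig: "rs Sig p q S = {s \<in> S. s \<le> q}"
  by (simp add: rs_def Sig_def)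
lemma le_Sig: "le Sig p S T \<longleftrightarrow> S \<subseteq> T \<and> S \<subseteq> {q. q \<le> p} \<and> (\<forall>a b. a \<in> S \<and> b \<le> a \<longrightarrow> b \<in> S)
                           \<and> T \<subseteq> {q. q \<le> p} \<and> (\<forall>a b. a \<in> T \<and> b \<le> a \<longrightarrow> b \<in> T)"
  by (simp add: le_def Sig_def)
lemma car_sub: "car (sub_obj X phi) p = {x \<in> car X p. p \<in> phi p x}"
  by (simp add: car_def sub_obj_def)
lemma rs_sub: "rs (sub_obj X phi) = rs X"
  by (simp add: rs_def sub_obj_def)
lemma le_sub: "le (sub_obj X phi) p x y \<longleftrightarrow> le X p x y \<and> p \<in> phi p x \<and> p \<in> phi p y"
  by (simp add: le_def sub_obj_def)

lemma ps_car0: "is_presheaf A \<Longrightarrow> (\<forall>p q x. q \<le> p \<and> x \<in> car A p \<longrightarrow> rs A p q x \<in> car A q)"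
  unfolding is_presheaf_def by (elim conjE, assumption)
lemma ps_id0: "is_presheaf A \<Longrightarrow> (\<forall>p x. x \<in> car A p \<longrightarrow> rs A p p x = x)"
  unfolding is_presheaf_def by (elim conjE, assumption)
lemma ps_comp0: "is_presheaf A \<Longrightarrow> (\<forall>p q s x. s \<le> q \<and> q \<le> p \<and> x \<in> car A p \<longrightarrow> rs A q s (rs A p q x) = rs A p s x)"
  unfolding is_presheaf_def by (elim conjE, assumption)
lemma ps_car: "is_presheaf A \<Longrightarrow> q \<le> p \<Longrightarrow> x \<in> car A p \<Longrightarrow> rs A p q x \<in> car A q"
  using ps_car0 by blast
lemma ps_id: "is_presheaf A \<Longrightarrow> x \<in> car A p \<Longrightarrow> rs A p p x = x"
  using ps_id0 by blast
lemma ps_comp: "is_presheaf A \<Longrightarrow> s \<le> q \<Longrightarrow> q \<le> p \<Longrightarrow> x \<in> car A p \<Longrightarrow> rs A q s (rs A p q x) = rs A p s x"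
  using ps_comp0 by blast
lemma ip_ps: "is_iposet A \<Longrightarrow> is_presheaf A" unfolding is_iposet_def by (elim conjE, assumption)
lemma ip_car0: "is_iposet A \<Longrightarrow> (\<forall>p x y. le A p x y \<longrightarrow> x \<in> car A p \<and> y \<in> car A p)"
  unfolding is_iposet_def by (elim conjE, assumption)
lemma ip_rs0: "is_iposet A \<Longrightarrow> (\<forall>p q x y. q \<le> p \<and> le A p x y \<longrightarrow> le A q (rs A p q x) (rs A p q y))"
  unfolding is_iposet_def by (elim conjE, assumption)
lemma ip_refl0: "is_iposet A \<Longrightarrow> (\<forall>p x. x \<in> car A p \<longrightarrow> le A p x x)"
  unfolding is_iposet_def by (elim conjE, assumption)
lemma ip_trans0: "is_iposet A \<Longrightarrow> (\<forall>p x y z. le A p x y \<and> le A p y z \<longrightarrow> le A p x z)"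
  unfolding is_iposet_def by (elim conjE, assumption)
lemma ip_antisym0: "is_iposet A \<Longrightarrow> (\<forall>p x y. le A p x y \<and> le A p y x \<longrightarrow> x = y)"
  unfolding is_iposet_def by (elim conjE, assumption)
lemma ip_car: "is_iposet A \<Longrightarrow> le A p x y \<Longrightarrow> x \<in> car A p \<and> y \<in> car A p" using ip_car0 by blast
lemma ip_rs: "is_iposet A \<Longrightarrow> q \<le> p \<Longrightarrow> le A p x y \<Longrightarrow> le A q (rs A p q x) (rs A p q y)" using ip_rs0 by blast
lemma ip_refl: "is_iposet A \<Longrightarrow> x \<in> car A p \<Longrightarrow> le A p x x" using ip_refl0 by blast
lemma ip_trans: "is_iposet A \<Longrightarrow> le A p x y \<Longrightarrow> le A p y z \<Longrightarrow> le A p x z" using ip_trans0 by blast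
lemma ip_antisym: "is_iposet A \<Longrightarrow> le A p x y \<Longrightarrow> le A p y x \<Longrightarrow> x = y" using ip_antisym0 by blast

lemma sm_car: "is_morph X Sig phi \<Longrightarrow> x \<in> car X p \<Longrightarrow> phi p x \<subseteq> {q. q \<le> p} \<and> (\<forall>a b. a \<in> phi p x \<and> b \<le> a \<longrightarrow> b \<in> phi p x)"
  unfolding is_morph_def car_Sig by blast
lemma sm_rs: "is_morph X Sig phi \<Longrightarrow> q \<le> p \<Longrightarrow> x \<in> car X p \<Longrightarrow> phi q (rs X p q x) = {s \<in> phi p x. s \<le> q}"
  unfolding is_morph_def rs_Sig by blast

lemma sub_rs_closed: "is_presheaf X \<Longrightarrow> is_morph X Sig phi \<Longrightarrow> q \<le> p \<Longrightarrow> x \<in> car (sub_obj X phi) p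
   \<Longrightarrow> rs X p q x \<in> car (sub_obj X phi) q"
proof -
  assume ps: "is_presheaf X" and m: "is_morph X Sig phi" and qp: "q \<le> p" and x: "x \<in> car (sub_obj X phi) p"
  have xc: "x \<in> car X p" and px: "p \<in> phi p x" using x by (auto simp: car_sub)
  have "q \<in> phi p x" using sm_car[OF m xc] px qp by blast
  hence "q \<in> phi q (rs X p q x)" using sm_rs[OF m qp xc] qp by simp
  thus ?thesis using ps_car[OF ps qp xc] by (simp add: car_sub)
qed

lemma morph_int: "is_morph X Sig phi \<Longrightarrow> is_morph X Sig psi \<Longrightarrow> is_morph X Sig (\<lambda>p x. phi p x \<inter> psi p x)"
proof -
  assume m1: "is_morph X Sig phi" and m2: "is_morph X Sig psi"
  have c: "phi p x \<inter> psi p x \<in> car Sig p" if x: "x \<in> car X p" for p x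
  proof -
    have a: "phi p x \<subseteq> {q. q \<le> p}" "\<forall>a b. a \<in> phi p x \<and> b \<le> a \<longrightarrow> b \<in> phi p x" using sm_car[OF m1 x] by auto
    have b: "psi p x \<subseteq> {q. q \<le> p}" "\<forall>a b. a \<in> psi p x \<and> b \<le> a \<longrightarrow> b \<in> psi p x" using sm_car[OF m2 x] by auto
    show ?thesis unfolding car_Sig using a b by auto
  qed
  have r: "phi q (rs X p q x) \<inter> psi q (rs X p q x) = rs Sig p q (phi p x \<inter> psi p x)" if "q \<le> p" "x \<in> car X p" for p q x
    unfolding rs_Sig sm_rs[OF m1 that] sm_rs[OF m2 that] by auto
  show ?thesis unfolding is_morph_def using c r by blast
qed

lemma morph_un: "is_morph X Sig phi \<Longrightarrow> is_morph X Sig psi \<Longrightarrow> is_morph X Sig (\<lambda>p x. phi p x \<union> psi p x)"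
proof -
  assume m1: "is_morph X Sig phi" and m2: "is_morph X Sig psi"
  have c: "phi p x \<union> psi p x \<in> car Sig p" if x: "x \<in> car X p" for p x
  proof -
    have a: "phi p x \<subseteq> {q. q \<le> p}" "\<forall>a b. a \<in> phi p x \<and> b \<le> a \<longrightarrow> b \<in> phi p x" using sm_car[OF m1 x] by auto
    have b: "psi p x \<subseteq> {q. q \<le> p}" "\<forall>a b. a \<in> psi p x \<and> b \<le> a \<longrightarrow> b \<in> psi p x" using sm_car[OF m2 x] by auto
    show ?thesis unfolding car_Sig using a b by auto
  qed
  have r: "phi q (rs X p q x) \<union> psi q (rs X p q x) = rs Sig p q (phi p x \<union> psi p x)" if "q \<le> p" "x \<in> car X p" for p q x
    unfolding rs_Sig sm_rs[OF m1 that] sm_rs[OF m2 that] by auto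
  show ?thesis unfolding is_morph_def using c r by blast
qed

lemma sub_iposet: "is_iposet X \<Longrightarrow> is_morph X Sig phi \<Longrightarrow> is_iposet (sub_obj X phi)"
proof -
  assume X: "is_iposet X" and m: "is_morph X Sig phi"
  have ps: "is_presheaf X" using X by (rule ip_ps)
  have "is_presheaf (sub_obj X phi)"
    unfolding is_presheaf_def rs_sub
    using sub_rs_closed[OF ps m] ps_id[OF ps] ps_comp[OF ps] by (auto simp: car_sub)
  moreover have "\<forall>p q x y. q \<le> p \<and> le (sub_obj X phi) p x y \<longrightarrow>
      le (sub_obj X phi) q (rs (sub_obj X phi) p q x) (rs (sub_obj X phi) p q y)"
    unfolding le_sub rs_sub
    using ip_rs[OF X] ip_car[OF X] sub_rs_closed[OF ps m] by (auto simp: car_sub)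
  moreover have "\<forall>p x y. le (sub_obj X phi) p x y \<longrightarrow> x \<in> car (sub_obj X phi) p \<and> y \<in> car (sub_obj X phi) p"
    unfolding le_sub car_sub using ip_car[OF X] by blast
  moreover have "\<forall>p x. x \<in> car (sub_obj X phi) p \<longrightarrow> le (sub_obj X phi) p x x"
    unfolding le_sub car_sub using ip_refl[OF X] by blast
  moreover have "\<forall>p x y z. le (sub_obj X phi) p x y \<and> le (sub_obj X phi) p y z \<longrightarrow> le (sub_obj X phi) p x z"
    unfolding le_sub using ip_trans[OF X] by blast
  moreover have "\<forall>p x y. le (sub_obj X phi) p x y \<and> le (sub_obj X phi) p y x \<longrightarrow> x = y"
    unfolding le_sub using ip_antisym[OF X] by blast
  ultimately show ?thesis unfolding is_iposet_def by blast
qed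

lemma sub_on_transfer: "sub_on (sub_obj X phi) q D \<Longrightarrow> sub_on X q D \<and> (\<forall>r. r \<le> q \<longrightarrow> D r \<subseteq> car (sub_obj X phi) r)"
  unfolding sub_on_def rs_sub car_sub by blast
lemma sub_on_back: "sub_on X q D \<Longrightarrow> (\<forall>r. r \<le> q \<longrightarrow> D r \<subseteq> car (sub_obj X phi) r) \<Longrightarrow> sub_on (sub_obj X phi) q D"
  unfolding sub_on_def rs_sub by blast
lemma dir_transfer: "dir_inh (sub_obj X phi) q D \<Longrightarrow> dir_inh X q D"
  unfolding dir_inh_def le_sub by blast

lemma L_sub:
  assumes X: "is_iposet X" and m: "is_morph X Sig psi"
    and S: "is_sup (sub_obj X phi) q E t" and t: "t \<in> car (sub_obj X psi) q"
    and E: "\<forall>r. r \<le> q \<longrightarrow> E r \<subseteq> car (sub_obj X psi) r"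
    and inc: "\<forall>p x. x \<in> car X p \<and> p \<in> psi p x \<longrightarrow> p \<in> phi p x"
  shows "is_sup (sub_obj X psi) q E t"
proof -
  have ps: "is_presheaf X" using X by (rule ip_ps)
  have ub: "is_ub (sub_obj X psi) q E t"
    unfolding is_ub_def
  proof (intro conjI t allI impI)
    fix r x assume "r \<le> q \<and> x \<in> E r"
    then have r: "r \<le> q" and x: "x \<in> E r" by auto
    have "le (sub_obj X phi) r x (rs (sub_obj X phi) q r t)" using S r x unfolding is_sup_def is_ub_def by blast
    moreover have "rs X q r t \<in> car (sub_obj X psi) r" using sub_rs_closed[OF ps m r t] .
    moreover have "x \<in> car (sub_obj X psi) r" using E r x by blast
    ultimately show "le (sub_obj X psi) r x (rs (sub_obj X psi) q r t)"
      by (simp add: le_sub rs_sub car_sub)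
  qed
  show ?thesis unfolding is_sup_def
  proof (intro conjI ub allI impI)
    fix r u assume A: "r \<le> q \<and> is_ub (sub_obj X psi) r E u"
    have uc: "u \<in> car (sub_obj X psi) r" using A unfolding is_ub_def by blast
    have "is_ub (sub_obj X phi) r E u"
      unfolding is_ub_def
    proof (intro conjI allI impI)
      show "u \<in> car (sub_obj X phi) r" using uc inc by (simp add: car_sub)
      fix ra x assume B: "ra \<le> r \<and> x \<in> E ra"
      have l: "le (sub_obj X psi) ra x (rs (sub_obj X psi) r ra u)" using A B unfolding is_ub_def by blast
      have "rs X r ra u \<in> car (sub_obj X psi) ra" using sub_rs_closed[OF ps m _ uc] B by blast
      moreover have "ra \<le> q" using A B order_trans by blast
      hence "x \<in> car (sub_obj X psi) ra" using E B by blast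
      ultimately show "le (sub_obj X phi) ra x (rs (sub_obj X phi) r ra u)"
        using l inc by (simp add: le_sub rs_sub car_sub)
    qed
    then have "le (sub_obj X phi) r (rs (sub_obj X phi) q r t) u" using S A unfolding is_sup_def by blast
    moreover have "rs X q r t \<in> car (sub_obj X psi) r" using sub_rs_closed[OF ps m _ t] A by blast
    moreover have "u \<in> car (sub_obj X psi) r" using A unfolding is_ub_def by blast
    ultimately show "le (sub_obj X psi) r (rs (sub_obj X psi) q r t) u"
      by (simp add: le_sub rs_sub car_sub)
  qed
qed

lemma L_back:
  assumes X: "is_iposet X" and m: "is_morph X Sig psi"
    and S: "is_sup X q E t" and t: "t \<in> car (sub_obj X psi) q"
    and E: "\<forall>r. r \<le> q \<longrightarrow> E r \<subseteq> car (sub_obj X psi) r"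
  shows "is_sup (sub_obj X psi) q E t"
proof -
  have ps: "is_presheaf X" using X by (rule ip_ps)
  have ub: "is_ub (sub_obj X psi) q E t"
    unfolding is_ub_def
  proof (intro conjI t allI impI)
    fix r x assume "r \<le> q \<and> x \<in> E r"
    then have r: "r \<le> q" and x: "x \<in> E r" by auto
    have "le X r x (rs X q r t)" using S r x unfolding is_sup_def is_ub_def by blast
    moreover have "rs X q r t \<in> car (sub_obj X psi) r" using sub_rs_closed[OF ps m r t] .
    moreover have "x \<in> car (sub_obj X psi) r" using E r x by blast
    ultimately show "le (sub_obj X psi) r x (rs (sub_obj X psi) q r t)"
      by (simp add: le_sub rs_sub car_sub)
  qed
  show ?thesis unfolding is_sup_def
  proof (intro conjI ub allI impI)
    fix r u assume A: "r \<le> q \<and> is_ub (sub_obj X psi) r E u"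
    have "is_ub X r E u"
      using A unfolding is_ub_def le_sub car_sub rs_sub by auto
    then have "le X r (rs X q r t) u" using S A unfolding is_sup_def by blast
    moreover have "rs X q r t \<in> car (sub_obj X psi) r" using sub_rs_closed[OF ps m _ t] A by blast
    moreover have "u \<in> car (sub_obj X psi) r" using A unfolding is_ub_def by blast
    ultimately show "le (sub_obj X psi) r (rs (sub_obj X psi) q r t) u"
      by (simp add: le_sub rs_sub car_sub)
  qed
qed

lemma sup_unique:
  assumes A: "is_iposet A" and s: "is_sup A q D s" and t: "is_sup A q D t"
  shows "s = t"
proof -
  have ps: "is_presheaf A" using A by (rule ip_ps)
  have sc: "s \<in> car A q" and tc: "t \<in> car A q" using s t unfolding is_sup_def is_ub_def by auto
  have "le A q (rs A q q s) t" using s t unfolding is_sup_def by blast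
  hence 1: "le A q s t" using ps_id[OF ps sc] by simp
  have "le A q (rs A q q t) s" using s t unfolding is_sup_def by blast
  hence 2: "le A q t s" using ps_id[OF ps tc] by simp
  show ?thesis using ip_antisym[OF A 1 2] .
qed

definition closedS :: "('l::order, 'a) pobj \<Rightarrow> ('l \<Rightarrow> 'a \<Rightarrow> 'l set) \<Rightarrow> bool" where
  "closedS X phi \<longleftrightarrow> (\<forall>q D s. sub_on X q D \<and> dir_inh X q D \<and> (\<forall>r. r \<le> q \<longrightarrow> D r \<subseteq> car (sub_obj X phi) r)
      \<and> is_sup X q D s \<longrightarrow> q \<in> phi q s)"

lemma L_X:
  assumes X: "is_dcpo X" and m: "is_morph X Sig phi" and c: "closedS X phi"
    and so: "sub_on (sub_obj X phi) q D" and di: "dir_inh (sub_obj X phi) q D"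
    and S: "is_sup (sub_obj X phi) q D s"
  shows "is_sup X q D s"
proof -
  have Xi: "is_iposet X" using X unfolding is_dcpo_def by blast
  have so': "sub_on X q D" and Dc: "\<forall>r. r \<le> q \<longrightarrow> D r \<subseteq> car (sub_obj X phi) r"
    using sub_on_transfer[OF so] by auto
  have di': "dir_inh X q D" using dir_transfer[OF di] .
  obtain s0 where s0: "is_sup X q D s0" using X so' di' unfolding is_dcpo_def by blast
  have "q \<in> phi q s0" using c so' di' Dc s0 unfolding closedS_def by blast
  moreover have "s0 \<in> car X q" using s0 unfolding is_sup_def is_ub_def by blast
  ultimately have "s0 \<in> car (sub_obj X phi) q" by (simp add: car_sub)
  hence "is_sup (sub_obj X phi) q D s0" using L_back[OF Xi m s0 _ Dc] by blast
  hence "s = s0" using sup_unique[OF sub_iposet[OF Xi m] S] by blast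
  thus ?thesis using s0 by simp
qed

lemma sub_dcpo:
  assumes X: "is_dcpo X" and m: "is_morph X Sig phi" and c: "closedS X phi"
  shows "is_dcpo (sub_obj X phi)"
proof -
  have Xi: "is_iposet X" using X unfolding is_dcpo_def by blast
  have "\<exists>s. is_sup (sub_obj X phi) q D s" if so: "sub_on (sub_obj X phi) q D" and di: "dir_inh (sub_obj X phi) q D" for q D
  proof -
    have so': "sub_on X q D" and Dc: "\<forall>r. r \<le> q \<longrightarrow> D r \<subseteq> car (sub_obj X phi) r"
      using sub_on_transfer[OF so] by auto
    have di': "dir_inh X q D" using dir_transfer[OF di] .
    obtain s0 where s0: "is_sup X q D s0" using X so' di' unfolding is_dcpo_def by blast
    have "q \<in> phi q s0" using c so' di' Dc s0 unfolding closedS_def by blast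
    moreover have "s0 \<in> car X q" using s0 unfolding is_sup_def is_ub_def by blast
    ultimately have "s0 \<in> car (sub_obj X phi) q" by (simp add: car_sub)
    thus ?thesis using L_back[OF Xi m s0 _ Dc] by blast
  qed
  thus ?thesis unfolding is_dcpo_def using sub_iposet[OF Xi m] by blast
qed

lemma mid_cont:
  assumes X: "is_dcpo X" and m: "is_morph X Sig phi" and c: "closedS X phi" and m2: "is_morph X Sig psi"
    and inc: "\<forall>p x. x \<in> car X p \<and> p \<in> phi p x \<longrightarrow> p \<in> psi p x"
  shows "continuous_D (sub_obj X phi) (sub_obj X psi) mid"
proof -
  have Xi: "is_iposet X" using X unfolding is_dcpo_def by blast
  have "is_morph (sub_obj X phi) (sub_obj X psi) mid"
    unfolding is_morph_def mid_def rs_sub car_sub using inc by auto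
  moreover have "is_sup (sub_obj X psi) q (\<lambda>r. mid r ` D r) (mid q s)"
    if so: "sub_on (sub_obj X phi) q D" and di: "dir_inh (sub_obj X phi) q D" and S: "is_sup (sub_obj X phi) q D s" for q D s
  proof -
    have Dc: "\<forall>r. r \<le> q \<longrightarrow> D r \<subseteq> car (sub_obj X phi) r" using sub_on_transfer[OF so] by auto
    have SX: "is_sup X q D s" using L_X[OF X m c so di S] .
    have "s \<in> car (sub_obj X phi) q" using S unfolding is_sup_def is_ub_def by blast
    hence "s \<in> car (sub_obj X psi) q" using inc by (simp add: car_sub)
    moreover have "\<forall>r. r \<le> q \<longrightarrow> D r \<subseteq> car (sub_obj X psi) r" using Dc inc by (auto simp: car_sub)
    ultimately have "is_sup (sub_obj X psi) q D s" using L_back[OF Xi m2 SX] by blast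
    thus ?thesis by (simp add: mid_def)
  qed
  ultimately show ?thesis unfolding continuous_D_def by blast
qed

lemma cont_morph: "continuous_D A B f \<Longrightarrow> is_morph A B f" unfolding continuous_D_def by blast
lemma cont_sup: "continuous_D A B f \<Longrightarrow> sub_on A q D \<Longrightarrow> dir_inh A q D \<Longrightarrow> is_sup A q D s
   \<Longrightarrow> is_sup B q (\<lambda>r. f r ` D r) (f q s)" unfolding continuous_D_def by blast
lemma morph_car: "is_morph A B f \<Longrightarrow> x \<in> car A p \<Longrightarrow> f p x \<in> car B p" unfolding is_morph_def by blast
lemma morph_rs: "is_morph A B f \<Longrightarrow> q \<le> p \<Longrightarrow> x \<in> car A p \<Longrightarrow> f q (rs A p q x) = rs B p q (f p x)"
  unfolding is_morph_def by blast
lemma sup_car: "is_sup A q D s \<Longrightarrow> s \<in> car A q" unfolding is_sup_def is_ub_def by blast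
lemma sup_ub: "is_sup A q D s \<Longrightarrow> r \<le> q \<Longrightarrow> x \<in> D r \<Longrightarrow> le A r x (rs A q r s)"
  unfolding is_sup_def is_ub_def by blast
lemma sup_least: "is_sup A q D s \<Longrightarrow> r \<le> q \<Longrightarrow> is_ub A r D u \<Longrightarrow> le A r (rs A q r s) u"
  unfolding is_sup_def by blast
lemma subon_car: "sub_on A q D \<Longrightarrow> r \<le> q \<Longrightarrow> x \<in> D r \<Longrightarrow> x \<in> car A r"
  unfolding sub_on_def by blast
lemma subon_rs: "sub_on A q D \<Longrightarrow> s \<le> r \<Longrightarrow> r \<le> q \<Longrightarrow> x \<in> D r \<Longrightarrow> rs A r s x \<in> D s"
  unfolding sub_on_def by blast

lemma cont_mono:
  assumes A: "is_iposet A" and f: "continuous_D A B f" and ab: "le A p a b"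
  shows "le B p (f p a) (rs B p p (f p b))"
proof -
  have ps: "is_presheaf A" using A by (rule ip_ps)
  have ac: "a \<in> car A p" and bc: "b \<in> car A p" using ip_car[OF A ab] by auto
  define D where "D = (\<lambda>r. if r \<le> p then {rs A p r a, rs A p r b} else {})"
  have so: "sub_on A p D" unfolding sub_on_def
  proof (intro conjI allI impI)
    fix r assume "r \<le> p" thus "D r \<subseteq> car A r" using ps_car[OF ps _ ac] ps_car[OF ps _ bc] by (auto simp: D_def)
  next
    fix r s x assume H: "s \<le> r \<and> r \<le> p \<and> x \<in> D r"
    hence "x = rs A p r a \<or> x = rs A p r b" by (auto simp: D_def)
    thus "rs A r s x \<in> D s" using H ps_comp[OF ps _ _ ac] ps_comp[OF ps _ _ bc] order_trans[of s r p]
      by (auto simp: D_def)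
  qed
  have key: "le A r x (rs A p r b)" if r: "r \<le> p" and x: "x \<in> D r" for r x
  proof -
    have "x = rs A p r a \<or> x = rs A p r b" using r x by (auto simp: D_def)
    thus ?thesis using ip_rs[OF A r ab] ip_refl[OF A ps_car[OF ps r bc]] by auto
  qed
  have di: "dir_inh A p D" unfolding dir_inh_def
  proof (intro conjI allI impI)
    show "D p \<noteq> {}" by (simp add: D_def)
    fix r x y assume H: "r \<le> p \<and> x \<in> D r \<and> y \<in> D r"
    have "rs A p r b \<in> D r" using H by (simp add: D_def)
    thus "\<exists>z\<in>D r. le A r x z \<and> le A r y z" using key H by blast
  qed
  have ub: "is_ub A p D b" unfolding is_ub_def using key bc by blast
  have S: "is_sup A p D b" unfolding is_sup_def
  proof (intro conjI allI impI ub)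
    fix r u assume H: "r \<le> p \<and> is_ub A r D u"
    have "rs A p r b \<in> D r" using H by (simp add: D_def)
    hence "le A r (rs A p r b) (rs A r r u)" using H unfolding is_ub_def by blast
    moreover have "u \<in> car A r" using H unfolding is_ub_def by blast
    ultimately show "le A r (rs A p r b) u" using ps_id[OF ps] by simp
  qed
  have SB: "is_sup B p (\<lambda>r. f r ` D r) (f p b)" using cont_sup[OF f so di S] .
  have "f p a \<in> f p ` D p" using ps_id[OF ps ac] by (simp add: D_def)
  thus ?thesis using sup_ub[OF SB order_refl] by blast
qed

lemma mono_phi:
  assumes X: "is_iposet X" and c: "continuous_D X Sig phi" and ab: "le X p a b" and pa: "p \<in> phi p a"
  shows "p \<in> phi p b"
  using cont_mono[OF X c ab] pa unfolding le_Sig rs_Sig by blast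

lemma mono_Z:
  assumes A: "is_iposet A" and B: "is_iposet B" and c: "continuous_D A B f" and ab: "le A p a b"
  shows "le B p (f p a) (f p b)"
proof -
  have "b \<in> car A p" using ip_car[OF A ab] by auto
  hence "f p b \<in> car B p" using morph_car[OF cont_morph[OF c]] by blast
  thus ?thesis using cont_mono[OF A c ab] ps_id[OF ip_ps[OF B]] by simp
qed

lemma closed_cont:
  assumes c: "continuous_D X Sig phi"
  shows "closedS X phi"
  unfolding closedS_def
proof (intro allI impI)
  fix q D s assume H: "sub_on X q D \<and> dir_inh X q D \<and> (\<forall>r. r \<le> q \<longrightarrow> D r \<subseteq> car (sub_obj X phi) r) \<and> is_sup X q D s"
  have so: "sub_on X q D" and di: "dir_inh X q D" and S0: "is_sup X q D s"
    and Dc: "\<forall>r. r \<le> q \<longrightarrow> D r \<subseteq> car (sub_obj X phi) r" using H by auto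
  have S: "is_sup Sig q (\<lambda>r. phi r ` D r) (phi q s)" using cont_sup[OF c so di S0] .
  obtain x where x: "x \<in> D q" using di unfolding dir_inh_def by blast
  have "x \<in> car (sub_obj X phi) q" using Dc x by blast
  hence "q \<in> phi q x" by (simp add: car_sub)
  moreover have "le Sig q (phi q x) (rs Sig q q (phi q s))" using sup_ub[OF S order_refl] x by blast
  ultimately show "q \<in> phi q s" unfolding le_Sig rs_Sig by blast
qed

lemma closedS_D: "closedS X phi \<Longrightarrow> sub_on X q D \<Longrightarrow> dir_inh X q D \<Longrightarrow> (\<forall>r. r \<le> q \<longrightarrow> D r \<subseteq> car (sub_obj X phi) r)
  \<Longrightarrow> is_sup X q D s \<Longrightarrow> q \<in> phi q s"
  unfolding closedS_def by blast

lemma closed_int: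
  assumes "closedS X phi" "closedS X psi"
  shows "closedS X (\<lambda>p x. phi p x \<inter> psi p x)"
  unfolding closedS_def
proof (intro allI impI)
  fix q D s assume H: "sub_on X q D \<and> dir_inh X q D \<and> (\<forall>r. r \<le> q \<longrightarrow> D r \<subseteq> car (sub_obj X (\<lambda>p x. phi p x \<inter> psi p x)) r) \<and> is_sup X q D s"
  have a: "\<forall>r. r \<le> q \<longrightarrow> D r \<subseteq> car (sub_obj X phi) r" and b: "\<forall>r. r \<le> q \<longrightarrow> D r \<subseteq> car (sub_obj X psi) r"
    using H by (auto simp: car_sub)
  have so: "sub_on X q D" and di: "dir_inh X q D" and S: "is_sup X q D s" using H by auto
  have "q \<in> phi q s" using closedS_D[OF assms(1) so di a S] .
  moreover have "q \<in> psi q s" using closedS_D[OF assms(2) so di b S] .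
  ultimately show "q \<in> phi q s \<inter> psi q s" by blast
qed

lemma closed_un:
  assumes X: "is_iposet X" and c1: "continuous_D X Sig phi" and c2: "continuous_D X Sig psi"
  shows "closedS X (\<lambda>p x. phi p x \<union> psi p x)"
  unfolding closedS_def
proof (intro allI impI)
  fix q D s assume H: "sub_on X q D \<and> dir_inh X q D \<and> (\<forall>r. r \<le> q \<longrightarrow> D r \<subseteq> car (sub_obj X (\<lambda>p x. phi p x \<union> psi p x)) r) \<and> is_sup X q D s"
  have so: "sub_on X q D" and di: "dir_inh X q D" and S: "is_sup X q D s"
    and Dc: "\<forall>r. r \<le> q \<longrightarrow> D r \<subseteq> car (sub_obj X (\<lambda>p x. phi p x \<union> psi p x)) r" using H by auto
  obtain x where x: "x \<in> D q" using di unfolding dir_inh_def by blast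
  have "x \<in> car (sub_obj X (\<lambda>p x. phi p x \<union> psi p x)) q" using Dc x by blast
  hence q: "q \<in> phi q x \<or> q \<in> psi q x" by (simp add: car_sub)
  have "le X q x (rs X q q s)" using sup_ub[OF S order_refl x] .
  moreover have "s \<in> car X q" using sup_car[OF S] .
  ultimately have l: "le X q x s" using ps_id[OF ip_ps[OF X]] by simp
  show "q \<in> phi q s \<union> psi q s" using q mono_phi[OF X c1 l] mono_phi[OF X c2 l] by blast
qed

lemma sig_witness:
  assumes c: "continuous_D X Sig phi" and so: "sub_on X q D" and di: "dir_inh X q D"
    and S: "is_sup X q D s" and qs: "q \<in> phi q s"
  shows "\<exists>x\<in>D q. q \<in> phi q x"
proof -
  have m: "is_morph X Sig phi" using cont_morph[OF c] .
  have SS: "is_sup Sig q (\<lambda>r. phi r ` D r) (phi q s)" using cont_sup[OF c so di S] .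
  define u where "u = {t. \<exists>r'. r' \<le> q \<and> (\<exists>y\<in>D r'. t \<in> phi r' y)}"
  have uc: "u \<in> car Sig q" unfolding car_Sig
  proof (intro CollectI conjI allI impI subsetI)
    fix t assume "t \<in> u"
    then obtain r' y where "r' \<le> q" "y \<in> D r'" "t \<in> phi r' y" unfolding u_def by blast
    thus "t \<le> q" using sm_car[OF m subon_car[OF so]] order_trans by blast
  next
    fix a b assume "a \<in> u \<and> b \<le> a"
    then obtain r' y where "r' \<le> q" "y \<in> D r'" "a \<in> phi r' y" "b \<le> a" unfolding u_def by blast
    hence "b \<in> phi r' y" using sm_car[OF m subon_car[OF so]] by blast
    thus "b \<in> u" using \<open>r' \<le> q\<close> \<open>y \<in> D r'\<close> unfolding u_def by blast
  qed
  have ub: "is_ub Sig q (\<lambda>r. phi r ` D r) u" unfolding is_ub_def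
  proof (intro conjI uc allI impI)
    fix r T assume H: "r \<le> q \<and> T \<in> phi r ` D r"
    then obtain y where y: "y \<in> D r" and T: "T = phi r y" by blast
    have yc: "y \<in> car X r" using subon_car[OF so] H y by blast
    have T1: "T \<subseteq> {q'. q' \<le> r}" "\<forall>a b. a \<in> T \<and> b \<le> a \<longrightarrow> b \<in> T" using sm_car[OF m yc] T by auto
    have T2: "T \<subseteq> u" using H y T unfolding u_def by blast
    have u2: "\<forall>a b. a \<in> u \<and> b \<le> a \<longrightarrow> b \<in> u" using uc unfolding car_Sig by blast
    show "le Sig r T (rs Sig q r u)" unfolding le_Sig rs_Sig
      using T1 T2 u2 order_trans by blast
  qed
  have "le Sig q (rs Sig q q (phi q s)) u" using sup_least[OF SS order_refl ub] .
  hence "q \<in> u" using qs unfolding le_Sig rs_Sig by blast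
  then obtain r' y where r': "r' \<le> q" and y: "y \<in> D r'" and qy: "q \<in> phi r' y" unfolding u_def by blast
  have "q \<le> r'" using sm_car[OF m subon_car[OF so r' y]] qy by blast
  hence "r' = q" using r' by simp
  thus ?thesis using y qy by blast
qed

lemma G:
  assumes X: "is_dcpo X" and c1: "continuous_D X Sig phi1" and c2: "continuous_D X Sig phi2"
    and Z: "is_iposet Z"
    and z1: "continuous_D (sub_obj X phi1) Z z1" and z2: "continuous_D (sub_obj X phi2) Z z2"
    and h1: "\<forall>p x. x \<in> car (sub_obj X phi1) p \<longrightarrow> h p x = z1 p x"
    and h2: "\<forall>p x. x \<in> car (sub_obj X phi2) p \<longrightarrow> h p x = z2 p x"
    and so: "sub_on (sub_obj X (\<lambda>p x. phi1 p x \<union> phi2 p x)) q D"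
    and di: "dir_inh (sub_obj X (\<lambda>p x. phi1 p x \<union> phi2 p x)) q D"
    and S: "is_sup X q D s" and s1: "q \<in> phi1 q s"
  shows "is_sup Z q (\<lambda>r. h r ` D r) (h q s)"
proof -
  have Xi: "is_iposet X" using X unfolding is_dcpo_def by blast
  have ps: "is_presheaf X" using Xi by (rule ip_ps)
  have m1: "is_morph X Sig phi1" using cont_morph[OF c1] .
  have m2: "is_morph X Sig phi2" using cont_morph[OF c2] .
  have so': "sub_on X q D" and Dc: "\<forall>r. r \<le> q \<longrightarrow> D r \<subseteq> car (sub_obj X (\<lambda>p x. phi1 p x \<union> phi2 p x)) r"
    using sub_on_transfer[OF so] by auto
  have di': "dir_inh X q D" using dir_transfer[OF di] .
  have sc: "s \<in> car X q" using sup_car[OF S] .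
  obtain x0 where x0: "x0 \<in> D q" and x01: "q \<in> phi1 q x0" using sig_witness[OF c1 so' di' S s1] by blast
  have x0c: "x0 \<in> car (sub_obj X phi1) q" using subon_car[OF so' order_refl x0] x01 by (simp add: car_sub)
  define D1 where "D1 = (\<lambda>r. {x \<in> D r. r \<in> phi1 r x})"
  have cof: "\<exists>z\<in>D1 r. le X r x z" if r: "r \<le> q" and x: "x \<in> D r" for r x
  proof -
    have x0r: "rs X q r x0 \<in> D r" using subon_rs[OF so' r order_refl x0] .
    have x0r1: "rs X q r x0 \<in> car (sub_obj X phi1) r" using sub_rs_closed[OF ps m1 r x0c] .
    obtain z where z: "z \<in> D r" and l1: "le (sub_obj X (\<lambda>p x. phi1 p x \<union> phi2 p x)) r x z"
      and l2: "le (sub_obj X (\<lambda>p x. phi1 p x \<union> phi2 p x)) r (rs X q r x0) z"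
      using di r x x0r unfolding dir_inh_def by blast
    have "le X r (rs X q r x0) z" using l2 by (simp add: le_sub)
    hence "r \<in> phi1 r z" using mono_phi[OF Xi c1] x0r1 by (auto simp: car_sub)
    hence "z \<in> D1 r" using z by (simp add: D1_def)
    moreover have "le X r x z" using l1 by (simp add: le_sub)
    ultimately show ?thesis by blast
  qed
  have D1c: "\<forall>r. r \<le> q \<longrightarrow> D1 r \<subseteq> car (sub_obj X phi1) r"
    using subon_car[OF so'] by (auto simp: D1_def car_sub)
  have so1: "sub_on (sub_obj X phi1) q D1" unfolding sub_on_def rs_sub
  proof (intro conjI allI impI)
    fix r assume "r \<le> q" thus "D1 r \<subseteq> car (sub_obj X phi1) r" using D1c by blast
  next
    fix r s x assume H: "s \<le> r \<and> r \<le> q \<and> x \<in> D1 r"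
    have "x \<in> car (sub_obj X phi1) r" using D1c H by blast
    hence "rs X r s x \<in> car (sub_obj X phi1) s" using sub_rs_closed[OF ps m1] H by blast
    moreover have "rs X r s x \<in> D s" using subon_rs[OF so'] H by (auto simp: D1_def)
    ultimately show "rs X r s x \<in> D1 s" by (simp add: D1_def car_sub)
  qed
  have di1: "dir_inh (sub_obj X phi1) q D1" unfolding dir_inh_def
  proof (intro conjI allI impI)
    show "D1 q \<noteq> {}" using x0 x01 by (auto simp: D1_def)
  next
    fix r x y assume H: "r \<le> q \<and> x \<in> D1 r \<and> y \<in> D1 r"
    then obtain z where z: "z \<in> D r" and l1: "le X r x z" and l2: "le X r y z"
      using di' unfolding dir_inh_def D1_def by blast
    have xr: "r \<in> phi1 r x" and yr: "r \<in> phi1 r y" using H by (auto simp: D1_def)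
    have zr: "r \<in> phi1 r z" using mono_phi[OF Xi c1 l1 xr] .
    have "z \<in> D1 r" using z zr by (simp add: D1_def)
    moreover have "le (sub_obj X phi1) r x z" using l1 xr zr by (simp add: le_sub)
    moreover have "le (sub_obj X phi1) r y z" using l2 yr zr by (simp add: le_sub)
    ultimately show "\<exists>z\<in>D1 r. le (sub_obj X phi1) r x z \<and> le (sub_obj X phi1) r y z" by blast
  qed
  have SX1: "is_sup X q D1 s" unfolding is_sup_def
  proof (intro conjI allI impI)
    show "is_ub X q D1 s" unfolding is_ub_def using sc sup_ub[OF S] by (auto simp: D1_def)
  next
    fix r u assume H: "r \<le> q \<and> is_ub X r D1 u"
    have "is_ub X r D u" unfolding is_ub_def
    proof (intro conjI allI impI)
      show "u \<in> car X r" using H unfolding is_ub_def by blast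
      fix r' x assume H2: "r' \<le> r \<and> x \<in> D r'"
      have r'q: "r' \<le> q" using H H2 order_trans by blast
      obtain z where z: "z \<in> D1 r'" and l: "le X r' x z" using cof[OF r'q] H2 by blast
      have "le X r' z (rs X r r' u)" using H H2 z unfolding is_ub_def by blast
      thus "le X r' x (rs X r r' u)" using ip_trans[OF Xi l] by blast
    qed
    thus "le X r (rs X q r s) u" using sup_least[OF S] H by blast
  qed
  have s1c: "s \<in> car (sub_obj X phi1) q" using sc s1 by (simp add: car_sub)
  have S1: "is_sup (sub_obj X phi1) q D1 s" using L_back[OF Xi m1 SX1 s1c D1c] .
  have SZ: "is_sup Z q (\<lambda>r. z1 r ` D1 r) (z1 q s)" using cont_sup[OF z1 so1 di1 S1] .
  have hs: "h q s = z1 q s" using h1 s1c by blast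
  have ub: "is_ub Z q (\<lambda>r. h r ` D r) (z1 q s)" unfolding is_ub_def
  proof (intro conjI allI impI)
    show "z1 q s \<in> car Z q" using sup_car[OF SZ] .
    fix r y assume H: "r \<le> q \<and> y \<in> h r ` D r"
    then obtain x where x: "x \<in> D r" and y: "y = h r x" by blast
    have r: "r \<le> q" using H by blast
    obtain z where z: "z \<in> D1 r" and l: "le X r x z" using cof[OF r x] by blast
    have zD: "z \<in> D r" and zr: "r \<in> phi1 r z" using z by (auto simp: D1_def)
    have zc: "z \<in> car X r" using subon_car[OF so' r zD] .
    have xc: "x \<in> car (sub_obj X (\<lambda>p x. phi1 p x \<union> phi2 p x)) r" using Dc r x by blast
    have hz: "h r z = z1 r z" using h1 zc zr by (simp add: car_sub)
    have "le Z r (h r x) (h r z)"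
    proof (cases "r \<in> phi1 r x")
      case True
      have "le (sub_obj X phi1) r x z" using l True zr by (simp add: le_sub)
      hence "le Z r (z1 r x) (z1 r z)" using mono_Z[OF sub_iposet[OF Xi m1] Z z1] by blast
      moreover have "h r x = z1 r x" using h1 xc True by (simp add: car_sub)
      ultimately show ?thesis using hz by simp
    next
      case False
      hence xr: "r \<in> phi2 r x" using xc by (simp add: car_sub)
      have zr2: "r \<in> phi2 r z" using mono_phi[OF Xi c2 l xr] .
      have "le (sub_obj X phi2) r x z" using l xr zr2 by (simp add: le_sub)
      hence "le Z r (z2 r x) (z2 r z)" using mono_Z[OF sub_iposet[OF Xi m2] Z z2] by blast
      moreover have "h r x = z2 r x" using h1 h2 xc xr by (simp add: car_sub)
      moreover have "h r z = z2 r z" using h2 zc zr2 by (simp add: car_sub)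
      ultimately show ?thesis by simp
    qed
    moreover have "le Z r (z1 r z) (rs Z q r (z1 q s))" using sup_ub[OF SZ r] z by blast
    ultimately show "le Z r y (rs Z q r (z1 q s))" using y hz ip_trans[OF Z] by metis
  qed
  have "is_sup Z q (\<lambda>r. h r ` D r) (z1 q s)" unfolding is_sup_def
  proof (intro conjI allI impI ub)
    fix r u assume H: "r \<le> q \<and> is_ub Z r (\<lambda>r. h r ` D r) u"
    have "is_ub Z r (\<lambda>r. z1 r ` D1 r) u" unfolding is_ub_def
    proof (intro conjI allI impI)
      show "u \<in> car Z r" using H unfolding is_ub_def by blast
      fix r' y assume H2: "r' \<le> r \<and> y \<in> z1 r' ` D1 r'"
      then obtain x where x: "x \<in> D1 r'" and y: "y = z1 r' x" by blast
      have r'q: "r' \<le> q" using H H2 order_trans by blast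
      have "x \<in> car (sub_obj X phi1) r'" using D1c r'q x by blast
      hence "y = h r' x" using h1 y by simp
      moreover have "x \<in> D r'" using x by (simp add: D1_def)
      ultimately have "y \<in> h r' ` D r'" by blast
      thus "le Z r' y (rs Z r r' u)" using H H2 unfolding is_ub_def by blast
    qed
    thus "le Z r (rs Z q r (z1 q s)) u" using sup_least[OF SZ] H by blast
  qed
  thus ?thesis using hs by simp
qed

theorem mainTheorem8:
  fixes X :: "('l::bounded_semilattice_inf_top, 'a) pobj"
    and phiU phiV :: "'l \<Rightarrow> 'a \<Rightarrow> 'l set"
  assumes "is_dcpo X"
    and "continuous_D X Sig phiU"
    and "continuous_D X Sig phiV"
  shows "is_pullback_D TYPE('z)
           (sub_obj X (\<lambda>p x. phiU p x \<inter> phiV p x)) (sub_obj X phiU) (sub_obj X phiV)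
           (sub_obj X (\<lambda>p x. phiU p x \<union> phiV p x)) mid mid mid mid
       \<and> is_pushout_D TYPE('w)
           (sub_obj X (\<lambda>p x. phiU p x \<inter> phiV p x)) (sub_obj X phiU) (sub_obj X phiV)
           (sub_obj X (\<lambda>p x. phiU p x \<union> phiV p x)) mid mid mid mid"
proof -
  note X = assms(1) and cU = assms(2) and cV = assms(3)
  define I where "I = (\<lambda>p x. phiU p x \<inter> phiV p x)"
  define J where "J = (\<lambda>p x. phiU p x \<union> phiV p x)"
  have Xi: "is_iposet X" using X unfolding is_dcpo_def by blast
  have ps: "is_presheaf X" using Xi by (rule ip_ps)
  have mU: "is_morph X Sig phiU" using cont_morph[OF cU] .
  have mV: "is_morph X Sig phiV" using cont_morph[OF cV] .
  have mI: "is_morph X Sig I" unfolding I_def using morph_int[OF mU mV] .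
  have mJ: "is_morph X Sig J" unfolding J_def using morph_un[OF mU mV] .
  have clU: "closedS X phiU" using closed_cont[OF cU] .
  have clV: "closedS X phiV" using closed_cont[OF cV] .
  have clI: "closedS X I" unfolding I_def using closed_int[OF clU clV] .
  have clJ: "closedS X J" unfolding J_def using closed_un[OF Xi cU cV] .
  have dU: "is_dcpo (sub_obj X phiU)" using sub_dcpo[OF X mU clU] .
  have dV: "is_dcpo (sub_obj X phiV)" using sub_dcpo[OF X mV clV] .
  have dI: "is_dcpo (sub_obj X I)" using sub_dcpo[OF X mI clI] .
  have dJ: "is_dcpo (sub_obj X J)" using sub_dcpo[OF X mJ clJ] .
  have iIU: "continuous_D (sub_obj X I) (sub_obj X phiU) mid" using mid_cont[OF X mI clI mU] by (simp add: I_def)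
  have iIV: "continuous_D (sub_obj X I) (sub_obj X phiV) mid" using mid_cont[OF X mI clI mV] by (simp add: I_def)
  have iUJ: "continuous_D (sub_obj X phiU) (sub_obj X J) mid" using mid_cont[OF X mU clU mJ] by (simp add: J_def)
  have iVJ: "continuous_D (sub_obj X phiV) (sub_obj X J) mid" using mid_cont[OF X mV clV mJ] by (simp add: J_def)
  have sq: "meq (sub_obj X I) (mcomp mid mid) (mcomp mid mid)" by (simp add: meq_def)
  have PB: "is_pullback_D TYPE('z) (sub_obj X I) (sub_obj X phiU) (sub_obj X phiV) (sub_obj X J) mid mid mid mid"
    unfolding is_pullback_D_def
  proof (intro conjI dI dU dV dJ iIU iIV iUJ iVJ sq allI impI)
    fix Z :: "('l, 'z) pobj" and za zb
    assume H: "is_dcpo Z \<and> continuous_D Z (sub_obj X phiU) za \<and> continuous_D Z (sub_obj X phiV) zb \<and>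
        meq Z (mcomp mid za) (mcomp mid zb)"
    have za: "continuous_D Z (sub_obj X phiU) za" and zb: "continuous_D Z (sub_obj X phiV) zb"
      and e0: "meq Z (mcomp mid za) (mcomp mid zb)" using H by auto
    have eq: "za p x = zb p x" if "x \<in> car Z p" for p x using e0 that by (simp add: meq_def mcomp_def mid_def)
    have inI: "za p x \<in> car (sub_obj X I) p" if x: "x \<in> car Z p" for p x
    proof -
      have "za p x \<in> car (sub_obj X phiU) p" using morph_car[OF cont_morph[OF za] x] .
      moreover have "zb p x \<in> car (sub_obj X phiV) p" using morph_car[OF cont_morph[OF zb] x] .
      ultimately show ?thesis using eq[OF x] by (simp add: car_sub I_def)
    qed
    have incI: "\<forall>p x. x \<in> car X p \<and> p \<in> I p x \<longrightarrow> p \<in> phiU p x" by (simp add: I_def)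
    have "is_morph Z (sub_obj X I) za" unfolding is_morph_def
      using inI morph_rs[OF cont_morph[OF za]] by (simp add: rs_sub)
    moreover have "is_sup (sub_obj X I) q (\<lambda>r. za r ` D r) (za q s)"
      if so: "sub_on Z q D" and di: "dir_inh Z q D" and S: "is_sup Z q D s" for q D s
    proof -
      have SU: "is_sup (sub_obj X phiU) q (\<lambda>r. za r ` D r) (za q s)" using cont_sup[OF za so di S] .
      have "za q s \<in> car (sub_obj X I) q" using inI[OF sup_car[OF S]] .
      moreover have "\<forall>r. r \<le> q \<longrightarrow> za r ` D r \<subseteq> car (sub_obj X I) r" using inI subon_car[OF so] by blast
      ultimately show ?thesis using L_sub[OF Xi mI SU _ _ incI] by blast
    qed
    ultimately have hc: "continuous_D Z (sub_obj X I) za" unfolding continuous_D_def by blast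
    show "\<exists>h. continuous_D Z (sub_obj X I) h \<and> meq Z (mcomp mid h) za \<and> meq Z (mcomp mid h) zb \<and>
           (\<forall>h'. continuous_D Z (sub_obj X I) h' \<and> meq Z (mcomp mid h') za \<and> meq Z (mcomp mid h') zb
                 \<longrightarrow> meq Z h h')"
    proof (intro exI[of _ za] conjI hc allI impI)
      show "meq Z (mcomp mid za) za" by (simp add: meq_def mcomp_def mid_def)
      show "meq Z (mcomp mid za) zb" using eq by (simp add: meq_def mcomp_def mid_def)
      fix h' assume "continuous_D Z (sub_obj X I) h' \<and> meq Z (mcomp mid h') za \<and> meq Z (mcomp mid h') zb"
      thus "meq Z za h'" by (simp add: meq_def mcomp_def mid_def)
    qed
  qed
  have PO: "is_pushout_D TYPE('w) (sub_obj X I) (sub_obj X phiU) (sub_obj X phiV) (sub_obj X J) mid mid mid mid"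
    unfolding is_pushout_D_def
  proof (intro conjI dI dU dV dJ iIU iIV iUJ iVJ sq allI impI)
    fix Z :: "('l, 'w) pobj" and za zb
    assume H: "is_dcpo Z \<and> continuous_D (sub_obj X phiU) Z za \<and> continuous_D (sub_obj X phiV) Z zb \<and>
        meq (sub_obj X I) (mcomp za mid) (mcomp zb mid)"
    have Zd: "is_dcpo Z" and za: "continuous_D (sub_obj X phiU) Z za" and zb: "continuous_D (sub_obj X phiV) Z zb"
      and e0: "meq (sub_obj X I) (mcomp za mid) (mcomp zb mid)" using H by auto
    have Zi: "is_iposet Z" using Zd unfolding is_dcpo_def by blast
    have eq: "za p x = zb p x" if "x \<in> car (sub_obj X I) p" for p x
      using e0 that by (simp add: meq_def mcomp_def mid_def)
    define h where "h = (\<lambda>p x. if p \<in> phiU p x then za p x else zb p x)"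
    have h1: "\<forall>p x. x \<in> car (sub_obj X phiU) p \<longrightarrow> h p x = za p x" by (simp add: h_def car_sub)
    have h2: "\<forall>p x. x \<in> car (sub_obj X phiV) p \<longrightarrow> h p x = zb p x"
    proof (intro allI impI)
      fix p x assume x: "x \<in> car (sub_obj X phiV) p"
      show "h p x = zb p x"
      proof (cases "p \<in> phiU p x")
        case True
        hence "x \<in> car (sub_obj X I) p" using x by (simp add: car_sub I_def)
        thus ?thesis using eq True by (simp add: h_def)
      qed (simp add: h_def)
    qed
    have UV: "x \<in> car (sub_obj X phiU) p \<or> x \<in> car (sub_obj X phiV) p" if "x \<in> car (sub_obj X J) p" for x p
      using that by (auto simp: car_sub J_def)
    have mh: "is_morph (sub_obj X J) Z h" unfolding is_morph_def
    proof (intro conjI allI impI)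
      fix p x assume x: "x \<in> car (sub_obj X J) p"
      show "h p x \<in> car Z p" using UV[OF x]
        morph_car[OF cont_morph[OF za]] morph_car[OF cont_morph[OF zb]] h1 h2 by metis
    next
      fix p q x assume H: "q \<le> p \<and> x \<in> car (sub_obj X J) p"
      hence qp: "q \<le> p" and x: "x \<in> car (sub_obj X J) p" by auto
      show "h q (rs (sub_obj X J) p q x) = rs Z p q (h p x)"
      proof (cases "x \<in> car (sub_obj X phiU) p")
        case True
        have "rs X p q x \<in> car (sub_obj X phiU) q" using sub_rs_closed[OF ps mU qp True] .
        thus ?thesis using True h1 morph_rs[OF cont_morph[OF za] qp True] by (simp add: rs_sub)
      next
        case False
        hence V: "x \<in> car (sub_obj X phiV) p" using UV[OF x] by blast
        have "rs X p q x \<in> car (sub_obj X phiV) q" using sub_rs_closed[OF ps mV qp V] .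
        thus ?thesis using V h2 morph_rs[OF cont_morph[OF zb] qp V] by (simp add: rs_sub)
      qed
    qed
    have comm: "(\<lambda>p x. phiV p x \<union> phiU p x) = (\<lambda>p x. phiU p x \<union> phiV p x)" by (auto simp: fun_eq_iff)
    have "is_sup Z q (\<lambda>r. h r ` D r) (h q s)"
      if so: "sub_on (sub_obj X J) q D" and di: "dir_inh (sub_obj X J) q D" and S: "is_sup (sub_obj X J) q D s" for q D s
    proof -
      have SX: "is_sup X q D s" using L_X[OF X mJ clJ so di S] .
      have "s \<in> car (sub_obj X J) q" using sup_car[OF S] .
      hence "q \<in> phiU q s \<or> q \<in> phiV q s" by (simp add: car_sub J_def)
      thus ?thesis
      proof
        assume s1: "q \<in> phiU q s"
        show ?thesis using G[OF X cU cV Zi za zb h1 h2 _ _ SX s1] so di by (simp add: J_def)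
      next
        assume s1: "q \<in> phiV q s"
        have so': "sub_on (sub_obj X (\<lambda>p x. phiV p x \<union> phiU p x)) q D" using so by (simp add: comm J_def)
        have di': "dir_inh (sub_obj X (\<lambda>p x. phiV p x \<union> phiU p x)) q D" using di by (simp add: comm J_def)
        show ?thesis using G[OF X cV cU Zi zb za h2 h1 so' di' SX s1] .
      qed
    qed
    hence hc: "continuous_D (sub_obj X J) Z h" unfolding continuous_D_def using mh by blast
    show "\<exists>h. continuous_D (sub_obj X J) Z h \<and> meq (sub_obj X phiU) (mcomp h mid) za \<and>
           meq (sub_obj X phiV) (mcomp h mid) zb \<and>
           (\<forall>h'. continuous_D (sub_obj X J) Z h' \<and> meq (sub_obj X phiU) (mcomp h' mid) za \<and>
                 meq (sub_obj X phiV) (mcomp h' mid) zb \<longrightarrow> meq (sub_obj X J) h h')"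
    proof (intro exI[of _ h] conjI hc allI impI)
      show "meq (sub_obj X phiU) (mcomp h mid) za" using h1 by (simp add: meq_def mcomp_def mid_def)
      show "meq (sub_obj X phiV) (mcomp h mid) zb" using h2 by (simp add: meq_def mcomp_def mid_def)
      fix h' assume H': "continuous_D (sub_obj X J) Z h' \<and> meq (sub_obj X phiU) (mcomp h' mid) za \<and>
                 meq (sub_obj X phiV) (mcomp h' mid) zb"
      have a: "\<forall>p x. x \<in> car (sub_obj X phiU) p \<longrightarrow> h' p x = za p x" using H' by (simp add: meq_def mcomp_def mid_def)
      have b: "\<forall>p x. x \<in> car (sub_obj X phiV) p \<longrightarrow> h' p x = zb p x" using H' by (simp add: meq_def mcomp_def mid_def)
      show "meq (sub_obj X J) h h'" unfolding meq_def
      proof (intro allI ballI)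
        fix p x assume "x \<in> car (sub_obj X J) p"
        thus "h p x = h' p x" using UV a b h1 h2 by metis
      qed
    qed
  qed
  show ?thesis using PB PO unfolding I_def J_def by (rule conjI)
qed

end
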